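(* Let $K$ be a positive integer, $\Delta x=2\pi/K$, and consider vectors $u=(u_1,\dots,u_K)^\top$ extended periodically by $u_{k+K}=u_k$. Let $\bar g_k,\bar f_k:\mathbb{R}^K\to\mathbb{R}$ ($k\in\mathbb{Z}$, with $\bar g_{k+K}=\bar g_k$, $\bar f_{k+K}=\bar f_k$) be differentiable maps. Suppose the initial value $u(0)$ satisfies $\sum_{k=1}^K\bar f_k(u(0))=0$. Let $u:[0,T)\to\mathbb{R}^K$ be a solution of the initial value problem for the average-difference method $$\delta_x^+\big(\dot u_k+\bar g_k(u)\big)=\mu_x^+\bar f_k(u)\qquad(k=1,\dots,K)$$ satisfying $\sum_{j=1}^K\sum_{k=1}^K\frac{\partial\bar f_j}{\partial u_k}(u(t))\neq0$ for all $t\in(0,T)$. Then $u$ is also a solution of $$\dot u_k+\bar g_k(u)=\delta^{-1}_{\mathrm{FD}}\bar f_k(u)+\mathcal{C}_{\mathrm d}(u)\qquad(k=1,\dots,K),$$ where $$\mathcal{C}_{\mathrm d}(u)=\frac{\sum_{j=1}^K\sum_{k=1}^K\frac{\partial\bar f_j}{\partial u_k}(u)\big(\bar g_k(u)-\delta^{-1}_{\mathrm{FD}}\bar f_k(u)\big)}{\sum_{j=1}^K\sum_{k=1}^K\frac{\partial\bar f_j}{\partial u_k}(u)}.$$ Conversely, a solution $u$ of the initial value problem for the latter equation satisfies the average-difference method equation.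
   Context: Here $\dot u_k=\mathrm{d}u_k/\mathrm{d}t$. The forward difference and forward average operators are $\delta_x^+w_k=(w_{k+1}-w_k)/\Delta x$ and $\mu_x^+w_k=(w_k+w_{k+1})/2$ (indices taken periodically). For a periodic sequence $w$ (so $w_0=w_K$), the discrete operator $\delta^{-1}_{\mathrm{FD}}$ is $$\delta^{-1}_{\mathrm{FD}}w_k=\Big(\frac{w_0}{2}+\sum_{i=1}^{k-1}w_i+\frac{w_k}{2}\Big)\Delta x-\frac{1}{2\pi}\sum_{i=1}^K\Big(\frac{w_0}{2}+\sum_{j=1}^{i-1}w_j+\frac{w_i}{2}\Big)(\Delta x)^2,$$ and $\delta^{-1}_{\mathrm{FD}}\bar f_k(u)$ means $\delta^{-1}_{\mathrm{FD}}$ applied to the sequence $(\bar f_k(u))_k$ and evaluated at index $k$. *)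

theory Defs
  imports "HOL-Analysis.Analysis"
begin

text \<open>The space R^K is modelled as real^'n with 'n an enumerable finite type,
  K = CARD('n). The coordinates are ordered by the list Enum.enum, and the
  integer index k is taken periodically modulo K (k = 1..K are the coordinates).\<close>

definition idx :: "int \<Rightarrow> 'n::enum" where
  "idx k = (Enum.enum :: 'n list) ! nat ((k - 1) mod int CARD('n))"

definition cmp :: "real^('n::enum) \<Rightarrow> int \<Rightarrow> real" where
  "cmp x k = x $ idx k"

definition dx :: "nat \<Rightarrow> real" where
  "dx K = 2 * pi / real K"

definition fwd_diff :: "nat \<Rightarrow> (int \<Rightarrow> real) \<Rightarrow> int \<Rightarrow> real" where
  "fwd_diff K w k = (w (k + 1) - w k) / dx K"

definition fwd_avg :: "(int \<Rightarrow> real) \<Rightarrow> int \<Rightarrow> real" where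
  "fwd_avg w k = (w k + w (k + 1)) / 2"

definition cumtrap :: "nat \<Rightarrow> (int \<Rightarrow> real) \<Rightarrow> int \<Rightarrow> real" where
  "cumtrap K w k = (w 0 / 2 + (\<Sum>i=1..k-1. w i) + w k / 2) * dx K"

definition dinv_FD :: "nat \<Rightarrow> (int \<Rightarrow> real) \<Rightarrow> int \<Rightarrow> real" where
  "dinv_FD K w k = cumtrap K w k
     - (1 / (2 * pi)) * (\<Sum>i=1..int K. (w 0 / 2 + (\<Sum>j=1..i-1. w j) + w i / 2) * (dx K)\<^sup>2)"

definition pdiff :: "(real^('n::enum) \<Rightarrow> real) \<Rightarrow> int \<Rightarrow> real^('n::enum) \<Rightarrow> real" where
  "pdiff F k x = frechet_derivative F (at x) (axis (idx k) 1)"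

definition Cd :: "(int \<Rightarrow> real^('n::enum) \<Rightarrow> real) \<Rightarrow> (int \<Rightarrow> real^('n::enum) \<Rightarrow> real) \<Rightarrow> real^('n::enum) \<Rightarrow> real" where
  "Cd g f x =
     (\<Sum>j=1..int CARD('n::enum). \<Sum>k=1..int CARD('n::enum).
        pdiff (f j) k x * (g k x - dinv_FD CARD('n::enum) (\<lambda>i. f i x) k))
     / (\<Sum>j=1..int CARD('n::enum). \<Sum>k=1..int CARD('n::enum). pdiff (f j) k x)"

end

theory Submission imports Defs begin

lemma sum_int_Suc: "(k::int) \<ge> 0 \<Longrightarrow> (\<Sum>i=1..k+1. w i) = (\<Sum>i=1..k. w i) + (w (k+1)::real)"
proof -
  assume "k \<ge> 0"
  then have "{1..k+1} = insert (k+1) {1..k}" using atLeastAtMostPlus1_int_conv[of 1 k] by (simp add: add.commute)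
  then show ?thesis by simp
qed

lemma cumtrap_step: "k \<ge> 1 \<Longrightarrow> cumtrap K w (k+1) - cumtrap K w k = (w k + w (k+1))/2 * dx K"
proof -
  assume k: "k \<ge> 1"
  have "(\<Sum>i=1..k. w i) = (\<Sum>i=1..k-1. w i) + w k" using sum_int_Suc[of "k-1" w] k by simp
  then show ?thesis unfolding cumtrap_def by (simp add: algebra_simps)
qed

lemma cumtrap_wrap: "K \<ge> 1 \<Longrightarrow> w 0 = w (int K) \<Longrightarrow>
  cumtrap K w 1 - cumtrap K w (int K) = (w (int K) + w 1)/2 * dx K - (\<Sum>i=1..int K. w i) * dx K"
proof -
  assume k: "K \<ge> 1" and w0: "w 0 = w (int K)"
  have "(\<Sum>i=1..int K. w i) = (\<Sum>i=1..int K-1. w i) + w (int K)" using sum_int_Suc[of "int K-1" w] k by simp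
  then show ?thesis unfolding cumtrap_def using w0 by (simp add: algebra_simps)
qed

lemma dinv_cumtrap: "dinv_FD K w k = cumtrap K w k - (1 / (2 * pi)) * (\<Sum>i=1..int K. (w 0 / 2 + (\<Sum>j=1..i-1. w j) + w i / 2) * (dx K)\<^sup>2)"
  unfolding dinv_FD_def by simp

lemma card_pos: "CARD('n::enum) \<ge> 1"
proof -
  have "CARD('n) > 0" by (simp add: card_gt_0_iff)
  then show ?thesis by simp
qed

lemma idx_per: "idx (k + int CARD('n::enum)) = (idx k :: 'n)"
proof -
  have "(k + int CARD('n) - 1) mod int CARD('n) = (k - 1) mod int CARD('n)"
    by (metis add.commute add_diff_eq mod_add_self1)
  then show ?thesis unfolding idx_def by simp
qed

lemma idx_bij: "bij_betw (idx :: int \<Rightarrow> 'n::enum) {1..int CARD('n)} UNIV"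
proof (rule bij_betw_imageI)
  have L: "length (Enum.enum :: 'n list) = CARD('n)" by (simp add: card_UNIV_length_enum)
  show "inj_on (idx :: int \<Rightarrow> 'n) {1..int CARD('n)}"
  proof (rule inj_onI)
    fix x y assume x: "x \<in> {1..int CARD('n)}" and y: "y \<in> {1..int CARD('n)}" and e: "(idx x :: 'n) = idx y"
    have mx: "(x-1) mod int CARD('n) = x - 1" using x by (simp add: mod_pos_pos_trivial)
    have my: "(y-1) mod int CARD('n) = y - 1" using y by (simp add: mod_pos_pos_trivial)
    have lx: "nat (x-1) < length (Enum.enum :: 'n list)" using L x by (simp add: nat_less_iff)
    have ly: "nat (y-1) < length (Enum.enum :: 'n list)" using L y by (simp add: nat_less_iff)
    have "(Enum.enum :: 'n list) ! nat (x-1) = Enum.enum ! nat (y-1)"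
      using e unfolding idx_def mx my .
    then have "nat (x-1) = nat (y-1)"
      using nth_eq_iff_index_eq[OF enum_distinct lx ly] by simp
    then show "x = y" using x y by (simp add: nat_eq_iff)
  qed
  show "(idx :: int \<Rightarrow> 'n) ` {1..int CARD('n)} = UNIV"
  proof (rule set_eqI, rule iffI)
    fix n :: 'n assume "n \<in> UNIV"
    then have "n \<in> set Enum.enum" by (simp add: UNIV_enum[symmetric])
    then obtain i where i: "i < length (Enum.enum :: 'n list)" "Enum.enum ! i = n" by (metis in_set_conv_nth)
    have "idx (int i + 1) = n" unfolding idx_def using i L by (simp add: mod_pos_pos_trivial)
    moreover have "int i + 1 \<in> {1..int CARD('n)}" using i L by simp
    ultimately show "n \<in> idx ` {1..int CARD('n)}" by (metis image_eqI)
  qed simp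
qed

lemma sum_idx: "(\<Sum>k=1..int CARD('n::enum). h (idx k :: 'n)) = (\<Sum>n\<in>UNIV. h n)"
  using sum.reindex_bij_betw[OF idx_bij, of h] by simp

lemma lin_expand:
  assumes "linear L"
  shows "L (y :: real^('n::enum)) = (\<Sum>k=1..int CARD('n). cmp y k * L (axis (idx k) 1))"
proof -
  have "L y = L (\<Sum>i\<in>UNIV. y $ i *s axis i 1)" by (simp add: basis_expansion)
  also have "\<dots> = (\<Sum>i\<in>UNIV. y $ i * L (axis i 1))"
    using assms by (simp add: linear_sum linear_cmul vector_scalar_mult_def scalar_mult_eq_scaleR)
  also have "\<dots> = (\<Sum>k=1..int CARD('n). cmp y k * L (axis (idx k) 1))"
    unfolding cmp_def by (rule sum_idx[symmetric])
  finally show ?thesis .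
qed
lemma dx_nz: "K \<ge> 1 \<Longrightarrow> dx K \<noteq> 0"
  unfolding dx_def by simp

lemma cd_alg:
  fixes p :: "int \<Rightarrow> int \<Rightarrow> real"
  assumes "\<forall>k\<in>A. x k = d k + c - g k"
  shows "(\<Sum>j\<in>B. \<Sum>k\<in>A. p j k * x k) = c * (\<Sum>j\<in>B. \<Sum>k\<in>A. p j k) - (\<Sum>j\<in>B. \<Sum>k\<in>A. p j k * (g k - d k))"
proof -
  have "(\<Sum>j\<in>B. \<Sum>k\<in>A. p j k * x k) = (\<Sum>j\<in>B. \<Sum>k\<in>A. c * p j k - p j k * (g k - d k))"
  proof (intro sum.cong refl)
    fix j k assume "k \<in> A"
    then have e: "x k = d k + c - g k" using assms by blast
    show "p j k * x k = c * p j k - p j k * (g k - d k)" by (simp only: e) (simp add: algebra_simps)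
  qed
  also have "\<dots> = c * (\<Sum>j\<in>B. \<Sum>k\<in>A. p j k) - (\<Sum>j\<in>B. \<Sum>k\<in>A. p j k * (g k - d k))"
    by (simp add: sum_subtractf sum_distrib_left)
  finally show ?thesis .
qed

lemma forward_alg:
  fixes v w :: "int \<Rightarrow> real"
  assumes K: "K \<ge> 1" and w0: "w 0 = w (int K)" and wK: "w (int K + 1) = w 1" and vK: "v (int K + 1) = v 1"
    and AD: "\<forall>k\<in>{1..int K}. fwd_diff K v k = fwd_avg w k"
  shows "(\<Sum>i=1..int K. w i) = 0 \<and> (\<forall>k\<in>{1..int K}. v k = dinv_FD K w k + (v 1 - dinv_FD K w 1))"
proof -
  have dx: "dx K \<noteq> 0" using dx_nz K by simp
  have ADk: "v (k+1) = v k + (w k + w (k+1))/2 * dx K" if "k \<in> {1..int K}" for k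
    using AD that dx unfolding fwd_diff_def fwd_avg_def by (auto simp: field_simps)
  have ind: "k \<le> int K \<longrightarrow> v k = cumtrap K w k + (v 1 - cumtrap K w 1)" if "k \<ge> 1" for k
    using that
  proof (induction k rule: int_ge_induct)
    case base then show ?case by simp
  next
    case (step k)
    show ?case
    proof
      assume "k + 1 \<le> int K"
      then have "k \<in> {1..int K}" using step by simp
      then show "v (k+1) = cumtrap K w (k+1) + (v 1 - cumtrap K w 1)"
        using ADk step cumtrap_step[of k K w] by auto
    qed
  qed
  have vKK: "v (int K) = cumtrap K w (int K) + (v 1 - cumtrap K w 1)" using ind[of "int K"] K by simp
  have "v (int K + 1) = v (int K) + (w (int K) + w (int K+1))/2 * dx K" using ADk[of "int K"] K by simp
  then have "cumtrap K w 1 - cumtrap K w (int K) = (w (int K) + w 1)/2 * dx K"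
    using vKK vK wK by simp
  then have "(\<Sum>i=1..int K. w i) * dx K = 0"
    using cumtrap_wrap[OF K w0] by linarith
  then have S: "(\<Sum>i=1..int K. w i) = 0" using dx by simp
  have "\<forall>k\<in>{1..int K}. v k = dinv_FD K w k + (v 1 - dinv_FD K w 1)"
  proof
    fix k assume k: "k \<in> {1..int K}"
    have "v k = cumtrap K w k + (v 1 - cumtrap K w 1)" using ind[of k] k by simp
    then show "v k = dinv_FD K w k + (v 1 - dinv_FD K w 1)" unfolding dinv_cumtrap by simp
  qed
  with S show ?thesis by blast
qed

lemma backward_alg:
  fixes v w :: "int \<Rightarrow> real"
  assumes K: "K \<ge> 1" and w0: "w 0 = w (int K)" and wK: "w (int K + 1) = w 1" and vK: "v (int K + 1) = v 1"
    and S: "(\<Sum>i=1..int K. w i) = 0"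
    and eq: "\<forall>k\<in>{1..int K}. v k = dinv_FD K w k + c"
  shows "\<forall>k\<in>{1..int K}. fwd_diff K v k = fwd_avg w k"
proof
  fix k assume k: "k \<in> {1..int K}"
  have dx: "dx K \<noteq> 0" using dx_nz K by simp
  have dd: "v (k+1) - v k = (w k + w (k+1))/2 * dx K"
  proof (cases "k = int K")
    case True
    have e1: "v 1 = dinv_FD K w 1 + c" using eq K by simp
    have e2: "v (int K) = dinv_FD K w (int K) + c" using eq K by simp
    have "v (k+1) - v k = cumtrap K w 1 - cumtrap K w (int K)"
      unfolding True vK e1 e2 dinv_cumtrap by linarith
    then show ?thesis using cumtrap_wrap[OF K w0] S True wK by simp
  next
    case False
    then have "k+1 \<in> {1..int K}" using k by simp
    then have e1: "v (k+1) = dinv_FD K w (k+1) + c" using eq by blast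
    have e2: "v k = dinv_FD K w k + c" using eq k by blast
    have "v (k+1) - v k = cumtrap K w (k+1) - cumtrap K w k"
      unfolding e1 e2 dinv_cumtrap by linarith
    then show ?thesis using cumtrap_step[of k K w] k by simp
  qed
  show "fwd_diff K v k = fwd_avg w k"
    unfolding fwd_diff_def fwd_avg_def dd using dx by simp
qed

lemma deriv_S:
  fixes fbar :: "int \<Rightarrow> real^('n::enum) \<Rightarrow> real" and u u' :: "real \<Rightarrow> real^('n::enum)"
  assumes f_diff: "\<forall>k x. fbar k differentiable (at x)"
    and ud: "(u has_vector_derivative u' t) (at t)"
  shows "((\<lambda>s. \<Sum>j=1..int CARD('n). fbar j (u s)) has_real_derivative
     (\<Sum>j=1..int CARD('n). \<Sum>k=1..int CARD('n). pdiff (fbar j) k (u t) * cmp (u' t) k)) (at t)"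
proof (rule DERIV_sum)
  fix j
  let ?F = "frechet_derivative (fbar j) (at (u t))"
  have h1: "(fbar j has_derivative ?F) (at (u t))" using f_diff frechet_derivative_works by blast
  have h2: "(u has_derivative (\<lambda>h. h *\<^sub>R u' t)) (at t)" using ud by (simp add: has_vector_derivative_def)
  have lin: "linear ?F" using h1 has_derivative_linear by blast
  have "((fbar j \<circ> u) has_derivative (?F \<circ> (\<lambda>h. h *\<^sub>R u' t))) (at t)"
    by (rule diff_chain_at[OF h2 h1])
  moreover have "(?F \<circ> (\<lambda>h. h *\<^sub>R u' t)) = (\<lambda>h. ?F (u' t) * h)"
  proof
    fix h show "(?F \<circ> (\<lambda>h. h *\<^sub>R u' t)) h = ?F (u' t) * h"
      using linear_cmul[OF lin, of h "u' t"] by simp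
  qed
  ultimately have "((fbar j \<circ> u) has_derivative (\<lambda>h. ?F (u' t) * h)) (at t)"
    by metis
  then have "((\<lambda>s. fbar j (u s)) has_real_derivative ?F (u' t)) (at t)"
    unfolding has_field_derivative_def comp_def by simp
  moreover have "?F (u' t) = (\<Sum>k=1..int CARD('n). pdiff (fbar j) k (u t) * cmp (u' t) k)"
    unfolding lin_expand[OF lin, of "u' t"] pdiff_def by (rule sum.cong) auto
  ultimately show "((\<lambda>s. fbar j (u s)) has_real_derivative (\<Sum>k=1..int CARD('n). pdiff (fbar j) k (u t) * cmp (u' t) k)) (at t)"
    by simp
qed

theorem mainTheorem6:
  fixes gbar fbar :: "int \<Rightarrow> real^('n::enum) \<Rightarrow> real"
    and u u' :: "real \<Rightarrow> real^('n::enum)" and T :: real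
  assumes g_per: "\<forall>k. gbar (k + int CARD('n::enum)) = gbar k"
    and f_per: "\<forall>k. fbar (k + int CARD('n::enum)) = fbar k"
    and g_diff: "\<forall>k x. gbar k differentiable (at x)"
    and f_diff: "\<forall>k x. fbar k differentiable (at x)"
    and u_deriv: "\<forall>t\<in>{0..<T}. (u has_vector_derivative u' t) (at t within {0..<T})"
    and init: "(\<Sum>k=1..int CARD('n::enum). fbar k (u 0)) = 0"
    and nondeg: "\<forall>t\<in>{0<..<T}.
       (\<Sum>j=1..int CARD('n::enum). \<Sum>k=1..int CARD('n::enum). pdiff (fbar j) k (u t)) \<noteq> 0"
  shows "((\<forall>t\<in>{0..<T}. \<forall>k\<in>{1..int CARD('n::enum)}.
             fwd_diff CARD('n::enum) (\<lambda>i. cmp (u' t) i + gbar i (u t)) k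
               = fwd_avg (\<lambda>i. fbar i (u t)) k)
          \<longrightarrow> (\<forall>t\<in>{0<..<T}. \<forall>k\<in>{1..int CARD('n::enum)}.
             cmp (u' t) k + gbar k (u t)
               = dinv_FD CARD('n::enum) (\<lambda>i. fbar i (u t)) k + Cd gbar fbar (u t)))
       \<and> ((\<forall>t\<in>{0<..<T}. \<forall>k\<in>{1..int CARD('n::enum)}.
             cmp (u' t) k + gbar k (u t)
               = dinv_FD CARD('n::enum) (\<lambda>i. fbar i (u t)) k + Cd gbar fbar (u t))
          \<longrightarrow> (\<forall>t\<in>{0<..<T}. \<forall>k\<in>{1..int CARD('n::enum)}.
             fwd_diff CARD('n::enum) (\<lambda>i. cmp (u' t) i + gbar i (u t)) k
               = fwd_avg (\<lambda>i. fbar i (u t)) k))"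
proof -
  let ?K = "CARD('n)"
  have K1: "?K \<ge> 1" by (rule card_pos)
  have cmpP: "cmp x (int ?K + 1) = cmp x 1" for x :: "real^('n::enum)"
    unfolding cmp_def using idx_per[of 1, where 'n='n] by (simp add: add.commute)
  have gP: "gbar (int ?K + 1) = gbar 1" using g_per by (metis add.commute)
  have fP1: "fbar (int ?K + 1) = fbar 1" using f_per by (metis add.commute)
  have fP0: "fbar 0 = fbar (int ?K)" using f_per by (metis add.left_neutral)
  define Sf where "Sf = (\<lambda>s. \<Sum>j=1..int ?K. fbar j (u s))"
  define D where "D = (\<lambda>t. \<Sum>j=1..int ?K. \<Sum>k=1..int ?K. pdiff (fbar j) k (u t) * cmp (u' t) k)"
  define Den where "Den = (\<lambda>t. \<Sum>j=1..int ?K. \<Sum>k=1..int ?K. pdiff (fbar j) k (u t))"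
  define N where "N = (\<lambda>t. \<Sum>j=1..int ?K. \<Sum>k=1..int ?K. pdiff (fbar j) k (u t) * (gbar k (u t) - dinv_FD ?K (\<lambda>i. fbar i (u t)) k))"
  have CdE: "Cd gbar fbar (u t) = N t / Den t" for t unfolding Cd_def N_def Den_def by simp
  have dS: "(Sf has_real_derivative D t) (at t)" if t: "t \<in> {0<..<T}" for t
  proof -
    have "(u has_vector_derivative u' t) (at t within {0..<T})" using u_deriv t by auto
    then have "(u has_vector_derivative u' t) (at t within {0<..<T})"
      by (rule has_vector_derivative_within_subset) auto
    moreover have "at t within {0<..<T} = at t" using t by (intro at_within_open) auto
    ultimately have "(u has_vector_derivative u' t) (at t)" by metis
    then show ?thesis unfolding Sf_def D_def by (rule deriv_S[OF f_diff])
  qed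
  have vP: "(\<lambda>i. cmp (u' t) i + gbar i (u t)) (int ?K + 1) = (\<lambda>i. cmp (u' t) i + gbar i (u t)) 1" for t
    using cmpP gP by simp
  have wP0: "(\<lambda>i. fbar i (u t)) 0 = (\<lambda>i. fbar i (u t)) (int ?K)" for t using fP0 by simp
  have wP1: "(\<lambda>i. fbar i (u t)) (int ?K + 1) = (\<lambda>i. fbar i (u t)) 1" for t using fP1 by simp
  show ?thesis
  proof (intro conjI impI)
    assume AD: "\<forall>t\<in>{0..<T}. \<forall>k\<in>{1..int ?K}.
             fwd_diff ?K (\<lambda>i. cmp (u' t) i + gbar i (u t)) k = fwd_avg (\<lambda>i. fbar i (u t)) k"
    show "\<forall>t\<in>{0<..<T}. \<forall>k\<in>{1..int ?K}.
             cmp (u' t) k + gbar k (u t) = dinv_FD ?K (\<lambda>i. fbar i (u t)) k + Cd gbar fbar (u t)"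
    proof (intro ballI)
      fix t k assume t: "t \<in> {0<..<T}" and k: "k \<in> {1..int ?K}"
      have FA: "\<And>s. s \<in> {0..<T} \<Longrightarrow> (\<Sum>i=1..int ?K. fbar i (u s)) = 0 \<and>
          (\<forall>k\<in>{1..int ?K}. cmp (u' s) k + gbar k (u s) = dinv_FD ?K (\<lambda>i. fbar i (u s)) k
              + ((cmp (u' s) 1 + gbar 1 (u s)) - dinv_FD ?K (\<lambda>i. fbar i (u s)) 1))"
      proof -
        fix s assume s: "s \<in> {0..<T}"
        have "\<forall>k\<in>{1..int ?K}. fwd_diff ?K (\<lambda>i. cmp (u' s) i + gbar i (u s)) k = fwd_avg (\<lambda>i. fbar i (u s)) k"
          using AD s by blast
        from forward_alg[OF K1 wP0[of s] wP1[of s] vP[of s] this]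
        show "?thesis s" by blast
      qed
      define c where "c = (cmp (u' t) 1 + gbar 1 (u t)) - dinv_FD ?K (\<lambda>i. fbar i (u t)) 1"
      have eqt: "\<forall>k\<in>{1..int ?K}. cmp (u' t) k = dinv_FD ?K (\<lambda>i. fbar i (u t)) k + c - gbar k (u t)"
      proof
        fix k assume k: "k \<in> {1..int ?K}"
        have "t \<in> {0..<T}" using t by simp
        then have "\<forall>k\<in>{1..int ?K}. cmp (u' t) k + gbar k (u t) = dinv_FD ?K (\<lambda>i. fbar i (u t)) k + c"
          unfolding c_def using FA by blast
        then show "cmp (u' t) k = dinv_FD ?K (\<lambda>i. fbar i (u t)) k + c - gbar k (u t)"
          using k by fastforce
      qed
      have "((\<lambda>_. 0) has_real_derivative D t) (at t)"
      proof (rule has_field_derivative_transform_within_open[OF dS[OF t], of "{0<..<T}"])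
        show "open {0<..<T}" by simp
        show "t \<in> {0<..<T}" using t .
        fix s assume "s \<in> {0<..<T}"
        then have "s \<in> {0..<T}" by simp
        then show "Sf s = 0" unfolding Sf_def using FA by blast
      qed
      then have D0: "D t = 0" using DERIV_const DERIV_unique by blast
      have "D t = c * Den t - N t"
        unfolding D_def Den_def N_def by (rule cd_alg[OF eqt])
      then have "c = Cd gbar fbar (u t)" unfolding CdE using D0 nondeg t Den_def
        by (simp add: field_simps)
      then show "cmp (u' t) k + gbar k (u t) = dinv_FD ?K (\<lambda>i. fbar i (u t)) k + Cd gbar fbar (u t)"
        using eqt k by simp
    qed
  next
    assume EQ: "\<forall>t\<in>{0<..<T}. \<forall>k\<in>{1..int ?K}.
             cmp (u' t) k + gbar k (u t) = dinv_FD ?K (\<lambda>i. fbar i (u t)) k + Cd gbar fbar (u t)"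
    have D0: "D t = 0" if t: "t \<in> {0<..<T}" for t
    proof -
      have eqt: "\<forall>k\<in>{1..int ?K}. cmp (u' t) k = dinv_FD ?K (\<lambda>i. fbar i (u t)) k + Cd gbar fbar (u t) - gbar k (u t)"
        using EQ t by (simp add: algebra_simps)
      have "D t = Cd gbar fbar (u t) * Den t - N t"
        unfolding D_def Den_def N_def by (rule cd_alg[OF eqt])
      then show ?thesis unfolding CdE using nondeg t Den_def by simp
    qed
    have contu: "continuous_on {0..<T} u"
      using u_deriv by (intro continuous_on_vector_derivative) auto
    have contf: "continuous_on UNIV (fbar j)" for j
      using f_diff by (intro continuous_at_imp_continuous_on) (auto intro: differentiable_imp_continuous_within)
    have contS: "continuous_on {0..<T} Sf"
      unfolding Sf_def
      by (intro continuous_on_sum continuous_on_compose2[OF contf contu]) auto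
    have S0: "Sf t = 0" if t: "t \<in> {0<..<T}" for t
    proof -
      have "Sf t = Sf 0"
      proof (rule DERIV_isconst_end[where f=Sf])
        show "0 < t" using t by simp
        show "continuous_on {0..t} Sf" using contS by (rule continuous_on_subset) (use t in auto)
        fix x assume "0 < x" "x < t"
        then have "x \<in> {0<..<T}" using t by simp
        then show "(Sf has_real_derivative 0) (at x)" using dS[of x] D0[of x] by simp
      qed
      then show ?thesis using init unfolding Sf_def by simp
    qed
    show "\<forall>t\<in>{0<..<T}. \<forall>k\<in>{1..int ?K}.
             fwd_diff ?K (\<lambda>i. cmp (u' t) i + gbar i (u t)) k = fwd_avg (\<lambda>i. fbar i (u t)) k"
    proof
      fix t assume t: "t \<in> {0<..<T}"
      show "\<forall>k\<in>{1..int ?K}. fwd_diff ?K (\<lambda>i. cmp (u' t) i + gbar i (u t)) k = fwd_avg (\<lambda>i. fbar i (u t)) k"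
      proof (rule backward_alg[OF K1 wP0 wP1 vP])
        show "(\<Sum>i=1..int ?K. fbar i (u t)) = 0" using S0[OF t] unfolding Sf_def .
        show "\<forall>k\<in>{1..int ?K}. cmp (u' t) k + gbar k (u t) = dinv_FD ?K (\<lambda>i. fbar i (u t)) k + Cd gbar fbar (u t)"
          using EQ t by blast
      qed
    qed
  qed
qed

end
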